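(* Let $0<\gamma<1$, $1<\alpha<2$, $\lambda\ge0$, $\rho>0$, $\eta\in\mathbb{R}$, $J=\sqrt{-1}$, $K>0$, $b>0$, $T>0$, and let $U:[0,b]\to[0,\infty)$. Let $M\ge2$, $N\ge1$ be integers, $h=b/M$, $\tau>0$ with $N\tau\le T$, $x_i=ih$. Suppose $\{v_i^n\}\subset\mathbb{C}$, $0\le i\le M$, $0\le n\le N$, satisfies $$\frac{1}{\tau^\gamma}\sum_{k=0}^{n}l_k^{(2)}e^{-J\eta U(x_i)k\tau}v_i^{n-k}-\kappa\frac{1}{h^\alpha}\sum_{j=0}^{M}w_{i,j}^\alpha v_j^n=f_i^n,\qquad 1\le i\le M-1,\ 1\le n\le N,$$ with $v_i^0=\phi_i$ ($1\le i\le M-1$) and $v_0^n=v_M^n=0$ ($0\le n\le N$), where $f_i^n\in\mathbb{C}$ and $\phi_i\in\mathbb{C}$ are given. Then $$\tau\sum_{n=1}^{N}\|v^n\|^2\le\frac{\tau^{1-\gamma}l_0^{(2)}b^\alpha|\Gamma(1-\alpha)|}{\kappa}\|v^0\|^2+\frac{b^{2\alpha}\Gamma^2(1-\alpha)}{4\kappa^2}\,\tau\sum_{n=1}^{N}\|f^n\|^2.$$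
   Context: Notation: $\kappa_\alpha=\frac{1}{2\cos(\alpha\pi/2)}$ and $\kappa=-K\kappa_\alpha>0$. $g_k^\beta=(-1)^k\binom{\beta}{k}$. $l_k^{2,\gamma}$ are defined by $\left((1-\zeta)+\tfrac12(1-\zeta)^2\right)^{\gamma}=\sum_k l_k^{2,\gamma}\zeta^k$. $l_0^{(2)}=l_0^{2,\gamma}-\left(\sum_{l=1}^{2}\frac1l(1-e^{-\lambda\tau})^l\right)^{\gamma}$ and, at grid point $x_i$, $l_k^{(2)}=e^{-(\lambda+\rho U(x_i))k\tau}l_k^{2,\gamma}$ for $k\ge1$. $w_0^\alpha=\frac{\alpha}{2}g_0^\alpha$, $w_k^\alpha=\frac{\alpha}{2}g_k^\alpha+\frac{2-\alpha}{2}g_{k-1}^\alpha$ ($k\ge1$), and $w_{i,j}^\alpha=w^\alpha_{i-j+1}$ if $j<i-1$, $w_0^\alpha+w_2^\alpha$ if $j=i\pm1$, $2w_1^\alpha$ if $j=i$, $w^\alpha_{j-i+1}$ if $j>i+1$. For grid vectors, $\|v^n\|^2=h\sum_{i=1}^{M-1}|v_i^n|^2$. *)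

theory Defs
  imports "HOL-Analysis.Analysis"
begin

definition kappa_alpha :: "real \<Rightarrow> real" where
  "kappa_alpha \<alpha> = 1 / (2 * cos (\<alpha> * pi / 2))"

definition kappa :: "real \<Rightarrow> real \<Rightarrow> real" where
  "kappa K \<alpha> = - K * kappa_alpha \<alpha>"

definition gcoef :: "real \<Rightarrow> nat \<Rightarrow> real" where
  "gcoef \<beta> k = (-1) ^ k * (\<beta> gchoose k)"

definition lcoef :: "real \<Rightarrow> nat \<Rightarrow> real" where
  "lcoef \<gamma> = (THE c. \<exists>r>0. \<forall>z::real. \<bar>z\<bar> < r \<longrightarrow>
      (\<lambda>k. c k * z ^ k) sums (((1 - z) + (1 - z)^2 / 2) powr \<gamma>))"

definition l0_2 :: "real \<Rightarrow> real \<Rightarrow> real \<Rightarrow> real" where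
  "l0_2 \<gamma> lam \<tau> = lcoef \<gamma> 0 -
     (\<Sum>l=1..(2::nat). (1 / real l) * (1 - exp (- lam * \<tau>)) ^ l) powr \<gamma>"

definition lk_2 :: "real \<Rightarrow> real \<Rightarrow> real \<Rightarrow> real \<Rightarrow> real \<Rightarrow> nat \<Rightarrow> real" where
  "lk_2 \<gamma> lam \<rho> \<tau> u k =
     (if k = 0 then l0_2 \<gamma> lam \<tau>
      else exp (- (lam + \<rho> * u) * real k * \<tau>) * lcoef \<gamma> k)"

definition wcoef :: "real \<Rightarrow> nat \<Rightarrow> real" where
  "wcoef \<alpha> k = (if k = 0 then \<alpha> / 2 * gcoef \<alpha> 0
     else \<alpha> / 2 * gcoef \<alpha> k + (2 - \<alpha>) / 2 * gcoef \<alpha> (k - 1))"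

definition wmat :: "real \<Rightarrow> nat \<Rightarrow> nat \<Rightarrow> real" where
  "wmat \<alpha> i j =
     (if j + 1 < i then wcoef \<alpha> (i - j + 1)
      else if j + 1 = i \<or> j = i + 1 then wcoef \<alpha> 0 + wcoef \<alpha> 2
      else if j = i then 2 * wcoef \<alpha> 1
      else wcoef \<alpha> (j - i + 1))"

definition gnorm2 :: "real \<Rightarrow> nat \<Rightarrow> (nat \<Rightarrow> complex) \<Rightarrow> real" where
  "gnorm2 h M v = h * (\<Sum>i=1..M-1. (cmod (v i))^2)"

end

theory Submission
  imports Defs "HOL-Complex_Analysis.Complex_Analysis"
begin

lemma gcoef_sum: "(\<Sum>k\<le>n. gcoef a k) = gcoef (a - 1) n"
proof (induction n)
  case 0 then show ?case by (simp add: gcoef_def)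
next
  case (Suc n)
  have p: "a gchoose Suc n = ((a - 1) gchoose n) + ((a - 1) gchoose Suc n)"
    using gbinomial_Suc_Suc[of "a - 1" n] by simp
  show ?case using Suc by (simp add: gcoef_def p algebra_simps)
qed

lemma gcoef_0[simp]: "gcoef a 0 = 1" by (simp add: gcoef_def)
lemma gcoef_1[simp]: "gcoef a (Suc 0) = - a" by (simp add: gcoef_def)

lemma wcoef_sum:
  assumes "1 \<le> m"
  shows "(\<Sum>k\<le>m. wcoef al k) = al/2 * gcoef (al - 1) m + (2 - al)/2 * gcoef (al - 1) (m - 1)"
  using assms
proof (induction m rule: dec_induct)
  case base
  then show ?case using gcoef_sum[of al 1] gcoef_sum[of al 0]
    by (simp add: wcoef_def field_simps)
next
  case (step m)
  have e1: "gcoef (al-1) (Suc m) = gcoef (al-1) m + gcoef al (Suc m)"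
    using gcoef_sum[of al "Suc m"] gcoef_sum[of al m] by simp
  have e2: "gcoef (al-1) m = gcoef (al-1) (m-1) + gcoef al m"
    using gcoef_sum[of al m] gcoef_sum[of al "m-1"] step(1)
    by (cases m) auto
  have "(\<Sum>k\<le>Suc m. wcoef al k) = (\<Sum>k\<le>m. wcoef al k) + wcoef al (Suc m)" by simp
  also have "\<dots> = al/2 * gcoef (al - 1) (Suc m) + (2 - al)/2 * gcoef (al - 1) m"
    unfolding step(3) e1 e2 by (simp add: wcoef_def field_simps)
  finally show ?case by simp
qed

definition Erow :: "real \<Rightarrow> nat \<Rightarrow> real" where
  "Erow al m = (\<Sum>d=1..m-1. if d = 1 then wcoef al 0 + wcoef al 2 else wcoef al (d+1))"

lemma Erow_eq:
  assumes "2 \<le> m" shows "Erow al m + wcoef al 1 = (\<Sum>k\<le>m. wcoef al k)"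
  using assms
proof (induction m rule: dec_induct)
  case base
  then show ?case by (simp add: Erow_def numeral_2_eq_2 atMost_Suc add_ac)
next
  case (step m)
  have "Erow al (Suc m) = Erow al m + wcoef al (m+1)"
    using step(1) unfolding Erow_def
    by (cases m) (auto simp: sum.cl_ivl_Suc)
  then show ?case using step by simp
qed

lemma Erow_1 [simp]: "Erow al (Suc 0) = 0" by (simp add: Erow_def)

lemma wmat_sym: "wmat al i j = wmat al j i"
  unfolding wmat_def by auto

lemma row_left:
  assumes "1 \<le> i"
  shows "(\<Sum>j=1..i-1. wmat al i j) = Erow al i"
  unfolding Erow_def
  by (rule sum.reindex_bij_witness[of _ "\<lambda>d. i - d" "\<lambda>j. i - j"]) (use assms in \<open>auto simp: wmat_def\<close>)

lemma row_right:
  assumes "i \<le> M - 1" "1 \<le> i"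
  shows "(\<Sum>j=i+1..M-1. wmat al i j) = Erow al (M - i)"
  unfolding Erow_def
  by (rule sum.reindex_bij_witness[of _ "\<lambda>d. d + i" "\<lambda>j. j - i"]) (use assms in \<open>auto simp: wmat_def\<close>)

lemma row_sum:
  assumes "1 \<le> i" "i \<le> M - 1"
  shows "(\<Sum>j=1..M-1. wmat al i j) = Erow al i + 2 * wcoef al 1 + Erow al (M - i)"
proof -
  have "{1..M-1} = {1..i-1} \<union> {i} \<union> {i+1..M-1}" using assms by auto
  moreover have "sum (wmat al i) ({1..i-1} \<union> {i+1..M-1}) = sum (wmat al i) {1..i-1} + sum (wmat al i) {i+1..M-1}"
    by (rule sum.union_disjoint) auto
  moreover have "sum (wmat al i) (insert i ({1..i-1} \<union> {i+1..M-1})) = wmat al i i + sum (wmat al i) ({1..i-1} \<union> {i+1..M-1})"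
    by (rule sum.insert) auto
  ultimately have "(\<Sum>j=1..M-1. wmat al i j) = (\<Sum>j=1..i-1. wmat al i j) + wmat al i i + (\<Sum>j=i+1..M-1. wmat al i j)"
    by simp
  also have "\<dots> = Erow al i + 2 * wcoef al 1 + Erow al (M - i)"
    using row_left[OF assms(1)] row_right[OF assms(2,1)] by (simp add: wmat_def)
  finally show ?thesis .
qed

definition qq :: "real \<Rightarrow> nat \<Rightarrow> real" where "qq al n = - gcoef (al - 1) n"

lemma gchoose_Suc_rec: "(a::real) gchoose Suc k = (a gchoose k) * (a - k) / (k + 1)"
proof -
  have "fact (Suc k) * (a gchoose Suc k) = (\<Prod>i = 0..<Suc k. a - of_nat i)"
    by (rule gbinomial_mult_fact)
  also have "\<dots> = (\<Prod>i = 0..<k. a - of_nat i) * (a - k)" by simp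
  also have "\<dots> = fact k * (a gchoose k) * (a - k)" by (simp add: gbinomial_mult_fact)
  finally have "fact (Suc k) * (a gchoose Suc k) = fact k * (a gchoose k) * (a - k)" .
  then have "fact k * ((k + 1) * (a gchoose Suc k)) = fact k * ((a gchoose k) * (a - k))"
    by (simp add: algebra_simps)
  then have "(k + 1) * (a gchoose Suc k) = (a gchoose k) * (a - k)"
    by (subst (asm) mult_left_cancel) auto
  then show ?thesis by (simp add: field_simps)
qed

lemma qq_Suc: "qq al (Suc n) = qq al n * (n + 1 - al) / (n + 1)"
  unfolding qq_def gcoef_def gchoose_Suc_rec by (simp add: field_simps)

lemma qq_1: "qq al (Suc 0) = al - 1" by (simp add: qq_def)

lemma qq_pos: assumes "1 < al" "al < 2" "1 \<le> n" shows "qq al n > 0"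
  using assms(3)
proof (induction n rule: dec_induct)
  case base then show ?case using assms by (simp add: qq_1)
next
  case (step n)
  have "real n + 1 - al > 0" using step(1) assms by linarith
  then show ?case using step by (simp add: qq_Suc)
qed

lemma qq_mono: assumes "1 < al" "al < 2" "1 \<le> a" "a \<le> b" shows "qq al b \<le> qq al a"
  using assms(4)
proof (induction b rule: dec_induct)
  case base then show ?case by simp
next
  case (step n)
  have n1: "1 \<le> n" using assms step by linarith
  have "real n + 1 - al > 0" using n1 assms by linarith
  have f: "(real n + 1 - al) / (real n + 1) \<le> 1" using assms by simp
  have "qq al (Suc n) = qq al n * ((real n + 1 - al) / (real n + 1))" by (simp add: qq_Suc)
  also have "\<dots> \<le> qq al n * 1"
    by (rule mult_left_mono[OF f]) (use qq_pos[OF assms(1,2) n1] in simp)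
  finally show ?case using step by simp
qed

lemma Erow_bound:
  assumes "1 < al" "al < 2" "1 \<le> m"
  shows "Erow al m + wcoef al 1 \<le> - qq al m"
proof (cases "m = 1")
  case True
  have "al * (1 - al) \<le> 0" using assms by (simp add: mult_nonneg_nonpos)
  then show ?thesis using True by (simp add: Erow_1 wcoef_def qq_1 field_simps)
next
  case False
  then have m2: "2 \<le> m" using assms by simp
  have "Erow al m + wcoef al 1 = al/2 * gcoef (al - 1) m + (2 - al)/2 * gcoef (al - 1) (m - 1)"
    using Erow_eq[OF m2] wcoef_sum[OF assms(3)] by simp
  also have "\<dots> = - (al/2 * qq al m + (2 - al)/2 * qq al (m - 1))" by (simp add: qq_def)
  also have "\<dots> \<le> - qq al m"
  proof -
    have "qq al m \<le> qq al (m - 1)" using qq_mono[OF assms(1,2), of "m-1" m] m2 by simp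
    then have "(2 - al)/2 * qq al m \<le> (2 - al)/2 * qq al (m - 1)" using assms by simp
    then show ?thesis by (simp add: field_simps)
  qed
  finally show ?thesis .
qed

lemma row_bound:
  assumes "1 < al" "al < 2" "1 \<le> i" "i \<le> M - 1"
  shows "(\<Sum>j=1..M-1. wmat al i j) \<le> - 2 * qq al (M - 1)"
proof -
  have a: "Erow al i + wcoef al 1 \<le> - qq al i" using Erow_bound assms by simp
  have b: "Erow al (M - i) + wcoef al 1 \<le> - qq al (M - i)" using Erow_bound assms by simp
  have "qq al (M - 1) \<le> qq al i" using qq_mono assms by simp
  moreover have "qq al (M - 1) \<le> qq al (M - i)" using qq_mono assms by simp
  ultimately show ?thesis using row_sum[OF assms(3,4), of al] a b by linarith
qed

lemma not_nonpos_int: fixes al :: real assumes "1 < al" "al < 2" shows "real n + 1 - al \<notin> \<int>\<^sub>\<le>\<^sub>0"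
proof
  assume "real n + 1 - al \<in> \<int>\<^sub>\<le>\<^sub>0"
  then obtain k where k: "real n + 1 - al = - real k" by (elim nonpos_Ints_cases')
  then have "al = real (n + 1 + k)" by simp
  with assms have "1 < real (n+1+k)" "real (n+1+k) < 2" by auto
  then have "n+1+k < 2" "1 < n+1+k" by (metis of_nat_less_iff of_nat_numeral, metis of_nat_less_iff of_nat_1)
  then show False by linarith
qed

lemma Gamma_1m_neg: fixes al :: real assumes "1 < al" "al < 2" shows "Gamma (1 - al) < 0"
proof -
  have "Gamma ((1 - al) + 1) = (1 - al) * Gamma (1 - al)"
    by (rule Gamma_plus1) (use not_nonpos_int[OF assms, of 0] in simp)
  moreover have "Gamma ((1 - al) + 1) > 0" using assms by simp
  ultimately have "(1 - al) * Gamma (1 - al) > 0" by simp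
  then show ?thesis using assms by (simp add: zero_less_mult_iff)
qed

lemma qq_Gamma: assumes "1 < al" "al < 2"
  shows "qq al n = Gamma (real n + 1 - al) / (fact n * (- Gamma (1 - al)))"
proof -
  define G where "G = - Gamma (1 - al)"
  have G: "G > 0" using Gamma_1m_neg[OF assms] by (simp add: G_def)
  have "qq al n = Gamma (real n + 1 - al) / (fact n * G)"
  proof (induction n)
    case 0 then show ?case using G by (simp add: qq_def G_def)
  next
    case (Suc n)
    have e: "real (Suc n) + 1 - al = (real n + 1 - al) + 1" by simp
    have g: "Gamma (real (Suc n) + 1 - al) = (real n + 1 - al) * Gamma (real n + 1 - al)"
      unfolding e by (rule Gamma_plus1) (rule not_nonpos_int[OF assms])
    have f: "fact (Suc n) = (real n + 1) * fact n" by simp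
    show ?case unfolding qq_Suc Suc g f using G by (simp add: field_simps)
  qed
  then show ?thesis by (simp add: G_def)
qed

lemma Gamma_logconv_bound:
  assumes "1 < al" "al < 2" "2 \<le> M"
  shows "Gamma (real M) \<le> real M powr al * Gamma (real M - al)"
proof -
  define x where "x = real M - al"
  have x0: "x > 0" using assms by (simp add: x_def)
  have gx: "Gamma x \<noteq> 0" using Gamma_real_pos[OF x0] by linarith
  have "(ln \<circ> Gamma) ((1 - (al - 1)) *\<^sub>R x + (al - 1) *\<^sub>R (x + 1))
        \<le> (1 - (al - 1)) * (ln \<circ> Gamma) x + (al - 1) * (ln \<circ> Gamma) (x + 1)"
    by (rule convex_onD[OF log_convex_Gamma_real]) (use assms x0 in auto)
  moreover have "(1 - (al - 1)) *\<^sub>R x + (al - 1) *\<^sub>R (x + 1) = real M - 1"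
    by (simp add: x_def algebra_simps)
  moreover have "Gamma (x + 1) = x * Gamma x"
    by (rule Gamma_plus1) (metis nonpos_Ints_nonpos not_le x0)
  ultimately have "ln (Gamma (real M - 1)) \<le> (2 - al) * ln (Gamma x) + (al - 1) * ln (x * Gamma x)"
    by (simp add: algebra_simps)
  also have "\<dots> = ln (Gamma x) + (al - 1) * ln x"
    using x0 gx by (simp add: ln_mult algebra_simps)
  finally have "ln (Gamma (real M - 1)) \<le> ln (Gamma x * x powr (al - 1))"
    using x0 gx by (simp add: ln_mult ln_powr)
  then have g1: "Gamma (real M - 1) \<le> Gamma x * x powr (al - 1)"
    using x0 assms Gamma_real_pos[OF x0] by (subst (asm) ln_le_cancel_iff) auto
  have "Gamma (real M) = Gamma ((real M - 1) + 1)" by simp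
  also have "\<dots> = (real M - 1) * Gamma (real M - 1)"
  proof (rule Gamma_plus1)
    show "real M - 1 \<notin> \<int>\<^sub>\<le>\<^sub>0" using assms nonpos_Ints_nonpos by fastforce
  qed
  also have "\<dots> \<le> real M * (Gamma x * x powr (al - 1))"
    using g1 assms x0 by (intro mult_mono) auto
  also have "\<dots> \<le> real M * (Gamma x * real M powr (al - 1))"
    using x0 assms by (intro mult_left_mono powr_mono2) (auto simp: x_def)
  also have "\<dots> = real M powr al * Gamma x"
    using assms by (simp add: powr_diff field_simps)
  finally show ?thesis by (simp add: x_def)
qed

lemma qq_lower:
  assumes "1 < al" "al < 2" "2 \<le> M"
  shows "qq al (M - 1) \<ge> real M powr (- al) / (- Gamma (1 - al))"
proof -
  have G: "- Gamma (1 - al) > 0" using Gamma_1m_neg[OF assms(1,2)] by simp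
  have f: "fact (M - 1) = Gamma (real M)"
    using Gamma_fact[of "M - 1", where 'a=real] assms by (simp add: of_nat_diff)
  have e: "real (M - 1) + 1 - al = real M - al" using assms by (simp add: of_nat_diff)
  have gp: "Gamma (real M) > 0" using assms by simp
  have "real M powr (- al) * Gamma (real M) \<le> real M powr (- al) * (real M powr al * Gamma (real M - al))"
    using Gamma_logconv_bound[OF assms] by (intro mult_left_mono) auto
  also have "\<dots> = Gamma (real M - al)" using assms by (simp add: powr_minus field_simps)
  finally have "real M powr (- al) \<le> Gamma (real M - al) / Gamma (real M)"
    using gp by (simp add: field_simps)
  then show ?thesis
    unfolding qq_Gamma[OF assms(1,2)] f e using G gp by (simp add: field_simps divide_right_mono)
qed

lemma re_mult_cnj_le: "Re (a * cnj b) \<le> ((cmod a)^2 + (cmod b)^2) / 2"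
proof -
  have "Re (a * cnj b) \<le> cmod (a * cnj b)" by (rule complex_Re_le_cmod)
  also have "\<dots> = cmod a * cmod b" by (simp add: norm_mult)
  also have "\<dots> \<le> ((cmod a)^2 + (cmod b)^2) / 2"
    using sum_squares_bound[of "cmod a" "cmod b"] by simp
  finally show ?thesis .
qed

lemma gcoef_Suc: "gcoef a (Suc k) = gcoef a k * (k - a) / (k + 1)"
  unfolding gcoef_def gchoose_Suc_rec by (simp add: field_simps)

lemma gcoef_nonneg: assumes "1 < al" "al < 2" "2 \<le> k" shows "gcoef al k \<ge> 0"
  using assms(3)
proof (induction k rule: dec_induct)
  case base
  have "gcoef al 2 = gcoef al (Suc 1)" by (simp add: numeral_2_eq_2)
  also have "\<dots> = al * (al - 1) / 2" unfolding gcoef_Suc by (simp add: algebra_simps)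
  moreover have "al * (al - 1) > 0" using assms by simp
  ultimately show ?case by simp
next
  case (step k)
  have "real k - al \<ge> 0" using step(1) assms by linarith
  then show ?case using step by (simp add: gcoef_Suc)
qed

lemma wcoef_nonneg: assumes "1 < al" "al < 2" "3 \<le> k" shows "wcoef al k \<ge> 0"
proof -
  have "gcoef al k \<ge> 0" "gcoef al (k - 1) \<ge> 0" using gcoef_nonneg assms by auto
  then show ?thesis using assms by (simp add: wcoef_def)
qed

lemma w02_nonneg: assumes "1 < al" "al < 2" shows "wcoef al 0 + wcoef al 2 \<ge> 0"
proof -
  have g2: "gcoef al (Suc (Suc 0)) = al * (al - 1) / 2"
    using gcoef_Suc[of al 1] by (simp add: numeral_2_eq_2 algebra_simps)
  have "wcoef al 0 + wcoef al 2 = al * (al - 1) * (al + 2) / 4"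
    by (simp add: wcoef_def g2 numeral_2_eq_2 field_simps)
  moreover have "al * (al - 1) * (al + 2) > 0" using assms by simp
  ultimately show ?thesis by simp
qed

lemma wmat_off: assumes "1 < al" "al < 2" "i \<noteq> j" shows "wmat al i j \<ge> 0"
  unfolding wmat_def using wcoef_nonneg[OF assms(1,2)] w02_nonneg[OF assms(1,2)] assms(3) by auto

lemma quad_form_bound:
  fixes W :: "nat \<Rightarrow> nat \<Rightarrow> real" and v :: "nat \<Rightarrow> complex"
  assumes fin: "finite I"
    and sym: "\<And>i j. i \<in> I \<Longrightarrow> j \<in> I \<Longrightarrow> W i j = W j i"
    and off: "\<And>i j. i \<in> I \<Longrightarrow> j \<in> I \<Longrightarrow> i \<noteq> j \<Longrightarrow> W i j \<ge> 0"
  shows "Re (\<Sum>i\<in>I. \<Sum>j\<in>I. complex_of_real (W i j) * v j * cnj (v i))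
         \<le> (\<Sum>i\<in>I. (\<Sum>j\<in>I. W i j) * (cmod (v i))^2)"
proof -
  have pt: "W i j * Re (v j * cnj (v i)) \<le> W i j * (((cmod (v i))^2 + (cmod (v j))^2) / 2)"
    if "i \<in> I" "j \<in> I" for i j
  proof (cases "i = j")
    case True
    have "Re (v i * cnj (v i)) = (cmod (v i))^2"
      by (simp add: complex_mult_cnj cmod_def power2_eq_square) 
    then show ?thesis using True by simp
  next
    case False
    have "Re (v j * cnj (v i)) \<le> ((cmod (v j))^2 + (cmod (v i))^2) / 2" by (rule re_mult_cnj_le)
    then show ?thesis using off[OF that False] by (intro mult_left_mono) auto
  qed
  have "Re (\<Sum>i\<in>I. \<Sum>j\<in>I. complex_of_real (W i j) * v j * cnj (v i))
        = (\<Sum>i\<in>I. \<Sum>j\<in>I. W i j * Re (v j * cnj (v i)))"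
    by (simp add: Re_sum mult.assoc)
  also have "\<dots> \<le> (\<Sum>i\<in>I. \<Sum>j\<in>I. W i j * (((cmod (v i))^2 + (cmod (v j))^2) / 2))"
    by (intro sum_mono pt)
  also have "\<dots> = (\<Sum>i\<in>I. \<Sum>j\<in>I. W i j * (cmod (v i))^2) / 2 + (\<Sum>i\<in>I. \<Sum>j\<in>I. W i j * (cmod (v j))^2) / 2"
    by (simp add: sum_divide_distrib sum.distrib add_divide_distrib distrib_left)
  also have "(\<Sum>i\<in>I. \<Sum>j\<in>I. W i j * (cmod (v j))^2) = (\<Sum>j\<in>I. \<Sum>i\<in>I. W i j * (cmod (v j))^2)"
    by (rule sum.swap)
  also have "\<dots> = (\<Sum>j\<in>I. \<Sum>i\<in>I. W j i * (cmod (v j))^2)"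
    by (intro sum.cong refl) (simp add: sym)
  finally show ?thesis by (simp add: sum_distrib_right)
qed

lemma spatial_bound:
  fixes v :: "nat \<Rightarrow> complex" and al :: real
  assumes "1 < al" "al < 2" "2 \<le> M" "v 0 = 0" "v M = 0"
  shows "Re (\<Sum>i=1..M-1. (\<Sum>j=0..M. complex_of_real (wmat al i j) * v j) * cnj (v i))
         \<le> - 2 * qq al (M - 1) * (\<Sum>i=1..M-1. (cmod (v i))^2)"
proof -
  have split: "(\<Sum>j=0..M. f j) = f 0 + (\<Sum>j=1..M-1. f j) + f M" for f :: "nat \<Rightarrow> complex"
  proof -
    have "(\<Sum>j=0..M. f j) = f 0 + (\<Sum>j=Suc 0..M. f j)" by (rule sum.atLeast_Suc_atMost) simp
    also have "(\<Sum>j=Suc 0..M. f j) = (\<Sum>j=Suc 0..Suc (M-1). f j)" using assms by simp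
    also have "\<dots> = (\<Sum>j=Suc 0..M-1. f j) + f (Suc (M - 1))" by (rule sum.cl_ivl_Suc[THEN trans]) simp
    finally show ?thesis using assms by simp
  qed
  have "Re (\<Sum>i=1..M-1. (\<Sum>j=0..M. complex_of_real (wmat al i j) * v j) * cnj (v i))
      = Re (\<Sum>i=1..M-1. \<Sum>j=1..M-1. complex_of_real (wmat al i j) * v j * cnj (v i))"
    by (simp add: split assms sum_distrib_right)
  also have "\<dots> \<le> (\<Sum>i=1..M-1. (\<Sum>j=1..M-1. wmat al i j) * (cmod (v i))^2)"
    by (rule quad_form_bound) (auto simp: wmat_sym intro!: wmat_off assms)
  also have "\<dots> \<le> (\<Sum>i=1..M-1. (- 2 * qq al (M - 1)) * (cmod (v i))^2)"
    by (intro sum_mono mult_right_mono row_bound) (use assms in auto)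
  finally show ?thesis by (simp add: sum_distrib_left)
qed

lemma deriv_aux:
  fixes g t :: real
  assumes c1: "cos t > 0" and c2: "cos (g*t) > 0"
  shows "((\<lambda>t. ln (cos (g * t)) - g * ln (cos t)) has_real_derivative (g * tan t - g * tan (g * t))) (at t)"
proof -
  have a: "((\<lambda>t. g * t) has_real_derivative g) (at t)"
    using DERIV_cmult[OF DERIV_ident, of g] by simp
  have b: "((\<lambda>t. cos (g * t)) has_real_derivative (- sin (g * t) * g)) (at t)"
    by (rule DERIV_chain2[OF DERIV_cos a])
  have c: "((\<lambda>t. ln (cos (g * t))) has_real_derivative (1 / cos (g * t) * (- sin (g * t) * g))) (at t)"
    by (rule DERIV_chain2[OF DERIV_ln_divide[OF c2] b])
  have d: "((\<lambda>t. ln (cos t)) has_real_derivative (1 / cos t * (- sin t))) (at t)"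
    by (rule DERIV_chain2[OF DERIV_ln_divide[OF c1] DERIV_cos])
  have e: "((\<lambda>t. ln (cos (g * t)) - g * ln (cos t)) has_real_derivative
      (1 / cos (g * t) * (- sin (g * t) * g) - g * (1 / cos t * (- sin t)))) (at t)"
    by (rule DERIV_diff[OF c DERIV_cmult[OF d]])
  show ?thesis by (rule DERIV_cong[OF e]) (simp add: tan_def field_simps)
qed

lemma cos_powr_le:
  fixes g th :: real
  assumes g: "0 \<le> g" "g \<le> 1" and th: "0 \<le> th" "th < pi/2"
  shows "ln (cos th) * g \<le> ln (cos (g * th))"
proof -
  define f where "f t = ln (cos (g * t)) - g * ln (cos t)" for t
  have "f 0 \<le> f th"
  proof (rule deriv_nonneg_imp_mono[of 0 th f "\<lambda>t. g * tan t - g * tan (g * t)"])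
    fix t assume t: "t \<in> {0..th}"
    have c1: "cos t > 0" using t th by (intro cos_gt_zero_pi) auto
    have gt: "g * t \<le> t" using t g by (simp add: mult_left_le_one_le)
    have gt0: "0 \<le> g * t" using t g by simp
    from t have t0: "0 \<le> t" and t1: "t \<le> th" by auto
    have c2: "cos (g * t) > 0" using t0 t1 th g gt gt0 pi_gt_zero by (intro cos_gt_zero_pi) linarith+
    show "(f has_real_derivative (g * tan t - g * tan (g * t))) (at t)"
      unfolding f_def by (rule deriv_aux[OF c1 c2])
    show "0 \<le> g * tan t - g * tan (g * t)"
    proof (cases "g * t = t")
      case True then show ?thesis by (simp only:)
    next
      case False
      then have "g * t < t" using gt by linarith
      then have "tan (g * t) < tan t" using t0 t1 th gt0 pi_gt_zero
        by (intro tan_monotone) linarith+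
      then have "g * tan (g * t) \<le> g * tan t" using g by (intro mult_left_mono) auto
      then show ?thesis by simp
    qed
  qed (use th in auto)
  then show ?thesis by (simp add: f_def mult.commute)
qed

lemma cos_powr_le':
  fixes g th :: real
  assumes g: "0 \<le> g" "g \<le> 1" and th: "\<bar>th\<bar> < pi/2"
  shows "cos th powr g \<le> cos (g * th)"
proof -
  have a: "ln (cos \<bar>th\<bar>) * g \<le> ln (cos (g * \<bar>th\<bar>))"
    using cos_powr_le[OF g, of "\<bar>th\<bar>"] th by simp
  have c1: "cos th > 0" using th by (intro cos_gt_zero_pi) auto
  have gt: "\<bar>g * th\<bar> \<le> \<bar>th\<bar>" using g by (simp add: abs_mult mult_left_le_one_le)
  have c2: "cos (g * th) > 0" using th gt by (intro cos_gt_zero_pi) auto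
  have e1: "cos \<bar>th\<bar> = cos th" by simp
  have e2: "cos (g * \<bar>th\<bar>) = cos (g * th)"
    by (cases "th \<ge> 0") (simp_all add: abs_if)
  have "cos th powr g = exp (ln (cos th) * g)" using c1 by (simp add: powr_def mult.commute)
  also have "\<dots> \<le> exp (ln (cos (g * th)))" using a e1 e2 by simp
  also have "\<dots> = cos (g * th)" using c2 by simp
  finally show ?thesis .
qed

definition Pb :: "complex \<Rightarrow> complex" where "Pb w = (1 - w) + (1 - w)^2 / 2"
definition Fc :: "real \<Rightarrow> complex \<Rightarrow> complex" where "Fc g w = exp (of_real g * Ln (Pb w))"
definition pr :: "real \<Rightarrow> real" where "pr t = (1 - t) + (1 - t)^2 / 2"
definition Fr :: "real \<Rightarrow> real \<Rightarrow> real" where "Fr g t = pr t powr g"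

lemma pr_pos: "t < 1 \<Longrightarrow> pr t > 0"
  unfolding pr_def by (simp add: add_pos_nonneg)

lemma pr_nonneg: "t \<le> 1 \<Longrightarrow> pr t \<ge> 0"
  unfolding pr_def by simp

lemma pr_mono: "0 \<le> s \<Longrightarrow> s \<le> t \<Longrightarrow> t \<le> 1 \<Longrightarrow> pr t \<le> pr s"
  unfolding pr_def by (intro add_mono divide_right_mono power_mono) auto

lemma Fr_mono: "0 \<le> g \<Longrightarrow> 0 \<le> s \<Longrightarrow> s \<le> t \<Longrightarrow> t \<le> 1 \<Longrightarrow> Fr g t \<le> Fr g s"
  unfolding Fr_def by (intro powr_mono2 pr_mono pr_nonneg) auto

lemma Re_Pb_ge:
  assumes "cmod w \<le> 1"
  shows "Re (Pb w) \<ge> pr (cmod w)"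
proof -
  define a where "a = Re w"
  define r where "r = cmod w"
  have ar: "a \<le> r" unfolding a_def r_def by (rule complex_Re_le_cmod)
  have r2: "r^2 = (Re w)^2 + (Im w)^2" unfolding r_def cmod_def by simp
  have "Re (Pb w) = 3/2 - 2 * a + a^2 - r^2/2"
    unfolding Pb_def a_def r2 by (simp add: power2_eq_square field_simps)
  moreover have "pr r = 3/2 - 2*r + r^2/2" unfolding pr_def by (simp add: power2_eq_square field_simps)
  moreover have "(r - a) * (2 - (r + a)) \<ge> 0"
    using ar assms unfolding r_def[symmetric] by (intro mult_nonneg_nonneg) linarith+
  ultimately show ?thesis unfolding r_def[symmetric] by (simp add: algebra_simps power2_eq_square)
qed

lemma Re_Pb_pos: "cmod w < 1 \<Longrightarrow> Re (Pb w) > 0"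
  using Re_Pb_ge[of w] pr_pos[of "cmod w"] by simp

lemma Pb_not_nonpos: "cmod w < 1 \<Longrightarrow> Pb w \<notin> \<real>\<^sub>\<le>\<^sub>0"
  using Re_Pb_pos[of w] by (auto simp: complex_nonpos_Reals_iff)

lemma Fc_holo: "Fc g holomorphic_on ball 0 1"
  unfolding Fc_def Pb_def[abs_def]
  by (intro holomorphic_intros holomorphic_on_Ln') (use Pb_not_nonpos in \<open>auto simp: Pb_def\<close>)

lemma Re_Fc_ge:
  assumes g: "0 \<le> g" "g \<le> 1" and w: "cmod w < 1"
  shows "Re (Fc g w) \<ge> Fr g (cmod w)"
proof -
  define P where "P = Pb w"
  have P0: "P \<noteq> 0" using Re_Pb_pos[OF w] by (auto simp: P_def)
  define th where "th = Im (Ln P)"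
  have th: "\<bar>th\<bar> < pi/2" using Re_Ln_pos_lt[OF P0] Re_Pb_pos[OF w] by (simp add: th_def P_def)
  have ReP: "Re P = exp (Re (Ln P)) * cos th"
    using exp_Ln[OF P0] Re_exp[of "Ln P"] by (simp add: th_def)
  have cth: "cos th > 0" using th by (intro cos_gt_zero_pi) auto
  have "Fr g (cmod w) \<le> Re P powr g"
    unfolding Fr_def P_def by (intro powr_mono2 g Re_Pb_ge pr_nonneg) (use w in auto)
  also have "Re P powr g = exp (g * Re (Ln P)) * cos th powr g"
    unfolding ReP using cth by (simp add: powr_def ln_mult distrib_left exp_add)
  also have "\<dots> \<le> exp (g * Re (Ln P)) * cos (g * th)"
    by (intro mult_left_mono cos_powr_le' g th) auto
  also have "\<dots> = Re (Fc g w)"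
    unfolding Fc_def P_def[symmetric] Re_exp by (simp add: th_def)
  finally show ?thesis .
qed

lemma Fc_real:
  assumes "\<bar>t\<bar> < 1"
  shows "Fc g (of_real t) = of_real (Fr g t)"
proof -
  have "Pb (of_real t) = of_real (pr t)" unfolding Pb_def pr_def by simp
  moreover have "pr t > 0" using assms by (intro pr_pos) auto
  ultimately have "Fc g (of_real t) = exp (of_real (g * ln (pr t)))"
    unfolding Fc_def by (simp add: Ln_of_real)
  also have "\<dots> = of_real (exp (g * ln (pr t)))" by (rule exp_of_real)
  finally have 1: "Fc g (of_real t) = of_real (exp (g * ln (pr t)))" .
  have 2: "exp (g * ln (pr t)) = Fr g t" unfolding Fr_def powr_def using \<open>pr t > 0\<close> by (simp add: mult.commute)
  show ?thesis using 1 unfolding 2 .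
qed

definition cc :: "real \<Rightarrow> nat \<Rightarrow> complex" where "cc g k = (deriv ^^ k) (Fc g) 0 / fact k"

lemma Fc_sums: "cmod w < 1 \<Longrightarrow> (\<lambda>k. cc g k * w^k) sums Fc g w"
  using holomorphic_power_series[OF Fc_holo[of g], of w] by (simp add: cc_def)

lemma powser_unique_real:
  fixes e :: "nat \<Rightarrow> real"
  assumes r: "r > 0" and s: "\<And>z. \<bar>z\<bar> < r \<Longrightarrow> (\<lambda>k. e k * z^k) sums 0"
  shows "e k = 0"
proof (induction k rule: less_induct)
  case (less k)
  define f where "f z = (if z = 0 then e k else 0)" for z :: real
  have "(\<lambda>i. e (i + k) * z ^ i) sums f z" if "norm z < r" for z
  proof (cases "z = 0")
    case True then show ?thesis by (simp add: f_def powser_sums_zero)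
  next
    case False
    have "(\<lambda>i. e (i + k) * z ^ (i + k)) sums (0 - (\<Sum>i<k. e i * z ^ i))"
      using sums_split_initial_segment[OF s[of z], of k] that by simp
    also have "(\<Sum>i<k. e i * z ^ i) = 0" using less by simp
    finally have "(\<lambda>i. inverse (z ^ k) * (e (i + k) * z ^ (i + k))) sums (inverse (z^k) * 0)"
      by (intro sums_mult) simp
    then show ?thesis using False by (simp add: f_def power_add field_simps)
  qed
  from powser_limit_0[OF r this] have lim: "(f \<longlongrightarrow> e (0 + k)) (at 0)" by simp
  have "eventually (\<lambda>z. f z = 0) (at (0::real))"
    by (auto simp: f_def eventually_at_filter)
  then have "(f \<longlongrightarrow> 0) (at 0)" by (rule tendsto_eventually)
  then show ?case using lim by (simp add: tendsto_unique[OF at_neq_bot])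
qed

lemma cc_real_sums:
  assumes "\<bar>z\<bar> < 1"
  shows "(\<lambda>k. Re (cc g k) * z^k) sums Fr g z" and "(\<lambda>k. Im (cc g k) * z^k) sums 0"
proof -
  have "(\<lambda>k. cc g k * of_real z ^ k) sums Fc g (of_real z)" using Fc_sums[of "of_real z" g] assms by simp
  then have "(\<lambda>k. cc g k * of_real z ^ k) sums of_real (Fr g z)" using Fc_real[OF assms] by simp
  then show "(\<lambda>k. Re (cc g k) * z^k) sums Fr g z" and "(\<lambda>k. Im (cc g k) * z^k) sums 0"
    by (simp_all add: sums_complex_iff flip: of_real_power)
qed

lemma cc_real: "cc g k = of_real (Re (cc g k))"
proof -
  have "Im (cc g k) = 0"
    by (rule powser_unique_real[of 1]) (use cc_real_sums(2) in auto)
  then show ?thesis by (simp add: complex_eq_iff)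
qed

lemma lcoef_eq: "lcoef g = (\<lambda>k. Re (cc g k))"
  unfolding lcoef_def
proof (rule the_equality)
  show "\<exists>r>0. \<forall>z. \<bar>z\<bar> < r \<longrightarrow> (\<lambda>k. Re (cc g k) * z ^ k) sums ((1 - z + (1 - z)\<^sup>2 / 2) powr g)"
    using cc_real_sums(1) by (intro exI[of _ 1]) (auto simp: Fr_def pr_def)
next
  fix c assume "\<exists>r>0. \<forall>z. \<bar>z\<bar> < r \<longrightarrow> (\<lambda>k. c k * z ^ k) sums ((1 - z + (1 - z)\<^sup>2 / 2) powr g)"
  then obtain r where r: "r > 0" and hc: "\<And>z. \<bar>z\<bar> < r \<Longrightarrow> (\<lambda>k. c k * z ^ k) sums ((1 - z + (1 - z)\<^sup>2 / 2) powr g)"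
    by auto
  have "c k - Re (cc g k) = 0" for k
  proof (rule powser_unique_real[of "min r 1"])
    fix z :: real assume z: "\<bar>z\<bar> < min r 1"
    have "(\<lambda>k. c k * z ^ k - Re (cc g k) * z ^ k) sums (Fr g z - Fr g z)"
      using hc[of z] cc_real_sums(1)[of z g] z by (intro sums_diff) (auto simp: Fr_def pr_def)
    then show "(\<lambda>k. (c k - Re (cc g k)) * z ^ k) sums 0" by (simp add: algebra_simps)
  qed (use r in simp)
  then show "c = (\<lambda>k. Re (cc g k))" by auto
qed

lemma circle_inv:
  assumes "cmod u = 1"
  shows "cnj u = inverse u" "u \<noteq> 0"
proof -
  show "u \<noteq> 0" using assms by auto
  have "u * cnj u = 1" using complex_norm_square[of u] assms by simp
  then show "cnj u = inverse u" using \<open>u \<noteq> 0\<close> by (simp add: field_simps)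
qed

lemma H_on_circle:
  fixes Gu u :: complex
  assumes "cmod u = 1"
  shows "(if m \<le> n then Gu / u ^ Suc (n - m) else Gu * u ^ (m - n - 1)) = Gu * cnj u ^ n * u ^ m / u"
proof -
  note ci = circle_inv[OF assms]
  show ?thesis
  proof (cases "m \<le> n")
    case True
    then have "u ^ n = u ^ m * u ^ (n - m)" by (simp add: power_add[symmetric])
    then show ?thesis using True ci(2) unfolding ci(1) by (simp add: field_simps power_inverse)
  next
    case False
    then have "u ^ m = u ^ n * u ^ (m - n - 1) * u" by (simp add: power_add[symmetric] power_Suc2[symmetric])
    then show ?thesis using False ci(2) unfolding ci(1) by (simp add: field_simps power_inverse)
  qed
qed

lemma toeplitz_pos:
  fixes \<omega> :: complex and x g :: real and z :: "nat \<Rightarrow> complex"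
  assumes g: "0 \<le> g" "g \<le> 1" and om: "cmod \<omega> < 1" "cmod \<omega> \<le> x" "x \<le> 1"
  defines "A \<equiv> (\<lambda>k. if k = 0 then cc g 0 - of_real (Fr g x) else cc g k * \<omega> ^ k)"
  shows "Re (\<Sum>n\<le>N. \<Sum>m\<le>n. A (n - m) * z m * cnj (z n)) \<ge> 0"
proof -
  define R where "R = 2 / (1 + cmod \<omega>)"
  have p: "1 + cmod \<omega> > 0" by (simp add: add_pos_nonneg)
  have R1: "R > 1" using om p by (simp add: R_def less_divide_eq)
  have oR: "cmod \<omega> * R < 1" using om p by (simp add: R_def divide_less_eq)
  define G where "G \<zeta> = Fc g (\<omega> * \<zeta>) - of_real (Fr g x)" for \<zeta>
  have inball: "cmod (\<omega> * \<zeta>) < 1" if "\<zeta> \<in> ball 0 R" for \<zeta>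
  proof -
    have "cmod (\<omega> * \<zeta>) = cmod \<omega> * cmod \<zeta>" by (simp add: norm_mult)
    also have "\<dots> \<le> cmod \<omega> * R" using that by (intro mult_left_mono) auto
    finally show ?thesis using oR by simp
  qed
  have holG: "G holomorphic_on ball 0 R"
  proof -
    have "(Fc g \<circ> (\<lambda>\<zeta>. \<omega> * \<zeta>)) holomorphic_on ball 0 R"
      by (rule holomorphic_on_compose) (auto intro!: holomorphic_intros holomorphic_on_subset[OF Fc_holo] dest: inball)
    then show ?thesis unfolding G_def[abs_def] by (auto intro!: holomorphic_intros simp: o_def)
  qed
  have sumsG: "(\<lambda>k. A k * \<zeta> ^ k) sums G \<zeta>" if "\<zeta> \<in> ball 0 R" for \<zeta>
  proof -
    have "(\<lambda>k. cc g k * (\<omega> * \<zeta>) ^ k - (if k = 0 then of_real (Fr g x) else 0)) sums (Fc g (\<omega> * \<zeta>) - of_real (Fr g x))"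
      by (intro sums_diff Fc_sums inball that) (rule sums_single[of 0 "\<lambda>_. of_real (Fr g x)", simplified])
    moreover have "cc g k * (\<omega> * \<zeta>) ^ k - (if k = 0 then of_real (Fr g x) else 0) = A k * \<zeta> ^ k" for k
      by (simp add: A_def power_mult_distrib)
    ultimately show ?thesis by (simp add: G_def)
  qed
  define F where "F = Abs_fps A"
  have "summable (\<lambda>k. A k * 1 ^ k)" using sumsG[of 1] R1 by (auto simp: sums_iff)
  then have "ereal (norm (1::complex)) \<le> conv_radius A" by (rule conv_radius_geI)
  then have "0 < conv_radius A" by (rule less_le_trans[rotated]) simp
  then have rad: "fps_conv_radius F > 0" by (simp add: fps_conv_radius_def F_def)
  have evF: "eval_fps F \<zeta> = G \<zeta>" if "\<zeta> \<in> ball 0 R" for \<zeta>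
    using sumsG[OF that] by (simp add: eval_fps_def F_def sums_iff)
  have coef: "A k = (deriv ^^ k) G 0 / fact k" for k
  proof -
    have "A k = (deriv ^^ k) (eval_fps F) 0 / fact k"
      using fps_nth_conv_deriv[OF rad, of k] by (simp add: F_def)
    also have "(deriv ^^ k) (eval_fps F) 0 = (deriv ^^ k) G 0"
    proof (rule higher_deriv_cong_ev)
      show "\<forall>\<^sub>F y in nhds 0. eval_fps F y = G y"
      proof -
        have "\<forall>\<^sub>F y in nhds 0. y \<in> ball (0::complex) R"
          by (rule eventually_nhds_in_open) (use R1 in auto)
        then show ?thesis by (rule eventually_mono) (rule evF)
      qed
    qed simp
    finally show ?thesis .
  qed
  have sub: "cball 0 1 \<subseteq> ball (0::complex) R" using R1 by auto
  have contG: "continuous_on (cball 0 1) G"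
    by (rule continuous_on_subset[OF holomorphic_on_imp_continuous_on[OF holG] sub])
  have holG1: "G holomorphic_on ball 0 1" by (rule holomorphic_on_subset[OF holG]) (use sub in auto)
  have I1: "((\<lambda>u. G u / u ^ Suc k) has_contour_integral (2 * pi * \<i> * A k)) (circlepath 0 1)" for k
    using Cauchy_has_contour_integral_higher_derivative_circlepath[OF contG holG1, of 0 k]
    by (simp add: coef)
  have I2: "((\<lambda>u. G u * u ^ j) has_contour_integral 0) (circlepath 0 1)" for j
  proof (rule Cauchy_theorem_convex_simple[of _ "ball 0 R"])
    show "(\<lambda>u. G u * u ^ j) holomorphic_on ball 0 R" using holG by (intro holomorphic_intros)
    show "path_image (circlepath 0 1) \<subseteq> ball 0 R" using sub by (auto simp: path_image_circlepath)
  qed auto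
  define H where "H n m u = (if m \<le> n then G u / u ^ Suc (n - m) else G u * u ^ (m - n - 1))" for n m u
  have IH: "(H n m has_contour_integral (2 * pi * \<i> * (if m \<le> n then A (n - m) else 0))) (circlepath 0 1)" for n m
    unfolding H_def[abs_def] by (cases "m \<le> n") (use I1 I2 in simp_all)
  define Tot where "Tot = (\<Sum>n\<le>N. \<Sum>m\<le>N. z m * cnj (z n) * (if m \<le> n then A (n - m) else 0))"
  have "((\<lambda>u. \<Sum>n\<le>N. \<Sum>m\<le>N. z m * cnj (z n) * H n m u) has_contour_integral
        (\<Sum>n\<le>N. \<Sum>m\<le>N. z m * cnj (z n) * (2 * pi * \<i> * (if m \<le> n then A (n - m) else 0)))) (circlepath 0 1)"
    by (intro has_contour_integral_sum has_contour_integral_lmul IH) auto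
  moreover have "(\<Sum>n\<le>N. \<Sum>m\<le>N. z m * cnj (z n) * (2 * pi * \<i> * (if m \<le> n then A (n - m) else 0))) = 2 * pi * \<i> * Tot"
    unfolding Tot_def by (simp add: sum_distrib_left mult_ac)
  ultimately have int1: "((\<lambda>u. \<Sum>n\<le>N. \<Sum>m\<le>N. z m * cnj (z n) * H n m u) has_contour_integral (2 * pi * \<i> * Tot)) (circlepath 0 1)"
    by simp
  define Sp where "Sp u = (\<Sum>m\<le>N. z m * u ^ m)" for u
  have onpath: "(\<Sum>n\<le>N. \<Sum>m\<le>N. z m * cnj (z n) * H n m u) = G u * of_real ((cmod (Sp u))^2) / u"
    if "u \<in> path_image (circlepath 0 1)" for u
  proof -
    have u1: "cmod u = 1" using that by (simp add: path_image_circlepath)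
    have "(\<Sum>n\<le>N. \<Sum>m\<le>N. z m * cnj (z n) * H n m u) = (\<Sum>n\<le>N. \<Sum>m\<le>N. z m * cnj (z n) * (G u * cnj u ^ n * u ^ m / u))"
      unfolding H_def using H_on_circle[OF u1] by simp
    also have "\<dots> = G u / u * (\<Sum>n\<le>N. \<Sum>m\<le>N. (cnj (z n) * cnj u ^ n) * (z m * u ^ m))"
      by (simp add: sum_distrib_left mult_ac)
    also have "(\<Sum>n\<le>N. \<Sum>m\<le>N. (cnj (z n) * cnj u ^ n) * (z m * u ^ m)) = (\<Sum>n\<le>N. cnj (z n) * cnj u ^ n) * Sp u"
      by (simp add: sum_product Sp_def)
    also have "(\<Sum>n\<le>N. cnj (z n) * cnj u ^ n) = cnj (Sp u)" by (simp add: Sp_def cnj_sum)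
    also have "cnj (Sp u) * Sp u = of_real ((cmod (Sp u))^2)"
      by (metis complex_norm_square mult.commute)
    finally show ?thesis by simp
  qed
  have int2: "((\<lambda>u. G u * of_real ((cmod (Sp u))^2) / u) has_contour_integral (2 * pi * \<i> * Tot)) (circlepath 0 1)"
    by (rule has_contour_integral_eq[OF int1 onpath])
  define e where "e t = exp (2 * of_real pi * \<i> * of_real t)" for t :: real
  have e1: "cmod (e t) = 1" for t by (simp add: e_def norm_exp_eq_Re)
  have int3: "((\<lambda>t. 2 * pi * \<i> * (G (e t) * of_real ((cmod (Sp (e t)))^2))) has_integral (2 * pi * \<i> * Tot)) {0..1}"
  proof (rule has_integral_eq[OF _ int2[unfolded has_contour_integral_def]])
    fix t :: real assume t: "t \<in> {0..1}"
    have ne: "e t \<noteq> 0" by (simp add: e_def)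
    have cp: "circlepath 0 1 t = e t" by (simp add: circlepath e_def)
    have vd: "vector_derivative (circlepath 0 1) (at t within {0..1}) = 2 * pi * \<i> * e t"
      using vector_derivative_circlepath01[of t 0 1] t by (simp add: e_def)
    show "G (circlepath 0 1 t) * of_real ((cmod (Sp (circlepath 0 1 t)))^2) / circlepath 0 1 t *
          vector_derivative (circlepath 0 1) (at t within {0..1}) =
          2 * pi * \<i> * (G (e t) * of_real ((cmod (Sp (e t)))^2))"
      unfolding cp vd using ne by (simp add: field_simps)
  qed
  have int4: "((\<lambda>t. G (e t) * of_real ((cmod (Sp (e t)))^2)) has_integral Tot) {0..1}"
    using has_integral_mult_right[OF int3, of "inverse (2 * pi * \<i>)"] by (simp add: field_simps)
  have int5: "((\<lambda>t. Re (G (e t)) * (cmod (Sp (e t)))^2) has_integral Re Tot) {0..1}"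
    using has_integral_linear[OF int4 bounded_linear_Re] by (simp add: o_def)
  have ReG: "Re (G u) \<ge> 0" if "cmod u = 1" for u
  proof -
    have "cmod (\<omega> * u) = cmod \<omega>" using that by (simp add: norm_mult)
    then have "Fr g x \<le> Fr g (cmod (\<omega> * u))" using om g by (intro Fr_mono) auto
    also have "\<dots> \<le> Re (Fc g (\<omega> * u))" using om g \<open>cmod (\<omega> * u) = cmod \<omega>\<close> by (intro Re_Fc_ge) auto
    finally show ?thesis by (simp add: G_def)
  qed
  have "0 \<le> Re Tot"
    by (rule has_integral_nonneg[OF int5]) (use ReG e1 in auto)
  moreover have "(\<Sum>n\<le>N. \<Sum>m\<le>n. A (n - m) * z m * cnj (z n)) = Tot"
  proof -
    have eqn: "(\<Sum>m\<le>n. A (n - m) * z m * cnj (z n)) = (\<Sum>m\<le>N. z m * cnj (z n) * (if m \<le> n then A (n - m) else 0))"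
      if "n \<le> N" for n
    proof -
      have st: "{m \<in> {..N}. m \<le> n} = {..n}" using that by auto
      have "(\<Sum>m\<le>N. z m * cnj (z n) * (if m \<le> n then A (n - m) else 0)) = (\<Sum>m\<le>N. if m \<le> n then z m * cnj (z n) * A (n - m) else 0)"
        by (intro sum.cong) auto
      also have "\<dots> = sum (\<lambda>m. z m * cnj (z n) * A (n - m)) {m \<in> {..N}. m \<le> n}"
        by (rule sum.inter_filter[symmetric]) simp
      also have "\<dots> = (\<Sum>m\<le>n. A (n - m) * z m * cnj (z n))" unfolding st by (simp add: mult_ac)
      finally show ?thesis by simp
    qed
    show ?thesis unfolding Tot_def by (rule sum.cong[OF refl]) (use eqn in simp)
  qed
  ultimately show ?thesis by simp
qed

lemma toeplitz_pos_gen: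
  fixes \<omega> :: complex and x g :: real and z :: "nat \<Rightarrow> complex"
  assumes g: "0 < g" "g \<le> 1" and om: "cmod \<omega> \<le> x" "x \<le> 1"
  defines "A \<equiv> (\<lambda>k. if k = 0 then cc g 0 - of_real (Fr g x) else cc g k * \<omega> ^ k)"
  shows "Re (\<Sum>n\<le>N. \<Sum>m\<le>n. A (n - m) * z m * cnj (z n)) \<ge> 0"
proof -
  define Ar where "Ar r k = (if k = 0 then cc g 0 - of_real (Fr g (r * x)) else cc g k * (of_real r * \<omega>) ^ k)" for r :: real and k
  define P where "P r = Re (\<Sum>n\<le>N. \<Sum>m\<le>n. Ar r (n - m) * z m * cnj (z n))" for r
  have x0: "0 \<le> x" using om norm_ge_zero[of \<omega>] by linarith
  have Pnn: "P r \<ge> 0" if r: "0 < r" "r < 1" for r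
  proof -
    have n: "cmod (of_real r * \<omega>) = r * cmod \<omega>" using r by (simp add: norm_mult)
    have "cmod (of_real r * \<omega>) < 1"
    proof -
      have "r * cmod \<omega> \<le> r" using om r by (intro mult_left_le) auto
      then show ?thesis using n r by linarith
    qed
    moreover have "cmod (of_real r * \<omega>) \<le> r * x" using n om r by (simp add: mult_left_mono)
    moreover have "r * x \<le> 1" using r om x0 by (simp add: mult_le_one)
    ultimately show ?thesis unfolding P_def Ar_def using toeplitz_pos[of g "of_real r * \<omega>" "r * x" z N] g by simp
  qed
  have contk: "((\<lambda>r. Ar r k) \<longlongrightarrow> A k) (at_left 1)" for k
  proof (cases "k = 0")
    case True
    have "((\<lambda>r. pr (r * x) powr g) \<longlongrightarrow> pr (1 * x) powr g) (at_left 1)"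
    proof (rule tendsto_powr')
      show "((\<lambda>r. pr (r * x)) \<longlongrightarrow> pr (1 * x)) (at_left 1)"
        unfolding pr_def by (intro tendsto_intros) auto
      show "pr (1 * x) \<noteq> 0 \<or> 0 < g \<and> (\<forall>\<^sub>F r in at_left 1. 0 \<le> pr (r * x))"
      proof (rule disjI2, intro conjI g)
        have "\<forall>\<^sub>F r in at_left (1::real). 0 < r \<and> r < 1"
          using eventually_at_left_real[of 0 1] by simp
        then show "\<forall>\<^sub>F r in at_left 1. 0 \<le> pr (r * x)"
        proof (rule eventually_mono)
          fix r :: real assume "0 < r \<and> r < 1"
          then have "r * x \<le> 1" using om x0 by (simp add: mult_le_one)
          then show "0 \<le> pr (r * x)" by (rule pr_nonneg)
        qed
      qed
    qed simp
    then have "((\<lambda>r. complex_of_real (pr (r * x) powr g)) \<longlongrightarrow> complex_of_real (pr x powr g)) (at_left 1)"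
      using tendsto_of_real by fastforce
    then have "((\<lambda>r. cc g 0 - of_real (Fr g (r * x))) \<longlongrightarrow> cc g 0 - of_real (Fr g x)) (at_left 1)"
      unfolding Fr_def by (rule tendsto_diff[OF tendsto_const])
    then show ?thesis using True by (simp add: Ar_def A_def)
  next
    case False
    have "((\<lambda>r. cc g k * (of_real r * \<omega>) ^ k) \<longlongrightarrow> cc g k * (of_real 1 * \<omega>) ^ k) (at_left 1)"
      by (intro tendsto_intros)
    then show ?thesis using False by (simp add: Ar_def A_def)
  qed
  have "(P \<longlongrightarrow> Re (\<Sum>n\<le>N. \<Sum>m\<le>n. A (n - m) * z m * cnj (z n))) (at_left 1)"
    unfolding P_def by (intro tendsto_intros contk)
  moreover have "\<forall>\<^sub>F r in at_left (1::real). 0 \<le> P r"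
  proof -
    have "\<forall>\<^sub>F r in at_left (1::real). 0 < r \<and> r < 1"
      using eventually_at_left_real[of 0 1] by simp
    then show ?thesis by (rule eventually_mono) (use Pnn in auto)
  qed
  ultimately show ?thesis by (rule tendsto_lowerbound) simp
qed

lemma lcoef_cc: "cc g k = of_real (lcoef g k)"
  using cc_real[of g k] by (simp add: lcoef_eq)

lemma time_form:
  fixes ga lam rho eta tau u :: real and v :: "nat \<Rightarrow> complex"
  assumes ga: "0 < ga" "ga < 1" and lam: "0 \<le> lam" and rho: "0 \<le> rho" and tau: "0 < tau" and u: "0 \<le> u"
  defines "a \<equiv> (\<lambda>k. complex_of_real (lk_2 ga lam rho tau u k) * exp (- \<i> * complex_of_real (eta * u * real k * tau)))"
  shows "Re (\<Sum>n=1..N. (\<Sum>k=0..n. a k * v (n - k)) * cnj (v n)) \<ge> - l0_2 ga lam tau * (cmod (v 0))^2"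
proof -
  define x where "x = exp (- lam * tau)"
  define \<omega> where "\<omega> = complex_of_real (exp (- (lam + rho * u) * tau)) * exp (- \<i> * complex_of_real (eta * u * tau))"
  have x1: "x \<le> 1" using lam tau by (simp add: x_def mult_nonneg_nonneg)
  have nexp: "cmod (exp (- \<i> * complex_of_real t)) = 1" for t by (simp add: norm_exp_eq_Re)
  have om: "cmod \<omega> \<le> x"
  proof -
    have "cmod \<omega> = exp (- (lam + rho * u) * tau)" by (simp add: \<omega>_def norm_mult nexp)
    also have "\<dots> \<le> x" unfolding x_def using rho u tau by (simp add: algebra_simps mult_nonneg_nonneg)
    finally show ?thesis .
  qed
  define A where "A \<equiv> (\<lambda>k. if k = 0 then cc ga 0 - of_real (Fr ga x) else cc ga k * \<omega> ^ k)"
  have aA: "a k = A k" for k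
  proof (cases "k = 0")
    case True
    have s: "(\<Sum>l=1..(2::nat). (1 / real l) * (1 - exp (- lam * tau)) ^ l) = pr x"
      by (simp add: pr_def x_def numeral_2_eq_2)
    show ?thesis using True unfolding a_def A_def lk_2_def l0_2_def s by (simp add: Fr_def lcoef_cc)
  next
    case False
    have e1: "exp (- (lam + rho * u) * real k * tau) = exp (- (lam + rho * u) * tau) ^ k"
      by (subst exp_of_nat_mult[symmetric]) (simp add: mult_ac)
    have e2: "exp (- \<i> * complex_of_real (eta * u * real k * tau)) = exp (- \<i> * complex_of_real (eta * u * tau)) ^ k"
      by (subst exp_of_nat_mult[symmetric]) (simp add: mult_ac)
    show ?thesis using False unfolding a_def A_def lk_2_def e1 e2
      by (simp add: lcoef_cc \<omega>_def power_mult_distrib mult_ac)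
  qed
  have pos: "Re (\<Sum>n\<le>N. \<Sum>m\<le>n. A (n - m) * v m * cnj (v n)) \<ge> 0"
    unfolding A_def by (rule toeplitz_pos_gen) (use ga om x1 in auto)
  have inner: "(\<Sum>k=0..n. a k * v (n - k)) * cnj (v n) = (\<Sum>m=0..n. A (n - m) * v m * cnj (v n))" for n
  proof -
    have "(\<Sum>k=0..n. a k * v (n - k)) = (\<Sum>k=0..n. a (n - k) * v (n - (n - k)))"
      by (subst sum.atLeastAtMost_rev) simp
    also have "\<dots> = (\<Sum>m=0..n. A (n - m) * v m)" by (intro sum.cong refl) (auto simp: aA)
    finally show ?thesis by (simp add: sum_distrib_right)
  qed
  have full: "(\<Sum>n\<le>N. \<Sum>m\<le>n. A (n - m) * v m * cnj (v n)) = A 0 * v 0 * cnj (v 0) + (\<Sum>n=1..N. (\<Sum>k=0..n. a k * v (n - k)) * cnj (v n))"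
  proof -
    have "(\<Sum>n\<le>N. \<Sum>m\<le>n. A (n - m) * v m * cnj (v n)) = (\<Sum>n=0..N. (\<Sum>k=0..n. a k * v (n - k)) * cnj (v n))"
      unfolding atLeast0AtMost[symmetric] by (rule sum.cong[OF refl]) (rule inner[symmetric])
    also have "\<dots> = (\<Sum>k=0..0. a k * v (0 - k)) * cnj (v 0) + (\<Sum>n=Suc 0..N. (\<Sum>k=0..n. a k * v (n - k)) * cnj (v n))"
      by (rule sum.atLeast_Suc_atMost) simp
    finally show ?thesis by (simp add: aA)
  qed
  have A0: "A 0 = of_real (l0_2 ga lam tau)" using aA[of 0] by (simp add: a_def lk_2_def)
  have "Re (A 0 * v 0 * cnj (v 0)) = l0_2 ga lam tau * (cmod (v 0))^2"
    unfolding A0 by (simp add: mult.assoc complex_norm_square[symmetric])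
  then show ?thesis using pos unfolding full by simp
qed

lemma kappa_pos:
  assumes "1 < al" "al < 2" "0 < K" shows "kappa K al > 0"
proof -
  have "cos (pi - al * pi / 2) > 0"
    using assms pi_gt_zero by (intro cos_gt_zero_pi) (auto simp: field_simps)
  then have "cos (al * pi / 2) < 0" by simp
  then have "2 * cos (al * pi / 2) < 0" by simp
  then have "K / (2 * cos (al * pi / 2)) < 0" using assms by (simp add: divide_pos_neg)
  then show ?thesis by (simp add: kappa_def kappa_alpha_def)
qed

lemma l0_nonneg:
  assumes "0 < g" "g < 1" "0 \<le> lam" "0 < tau"
  shows "l0_2 g lam tau \<ge> 0"
proof -
  have "cc g 0 = Fc g 0" by (simp add: cc_def)
  also have "\<dots> = of_real (Fr g 0)" using Fc_real[of 0 g] by simp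
  finally have "lcoef g 0 = Fr g 0" by (simp add: lcoef_eq)
  moreover have s: "(\<Sum>l=1..(2::nat). (1 / real l) * (1 - exp (- lam * tau)) ^ l) = pr (exp (- lam * tau))"
    by (simp add: pr_def numeral_2_eq_2)
  moreover have "Fr g (exp (- lam * tau)) \<le> Fr g 0"
    using assms by (intro Fr_mono) (auto simp: mult_nonneg_nonneg)
  ultimately show ?thesis unfolding l0_2_def s Fr_def by simp
qed

lemma young: fixes fz vz :: complex and mu :: real assumes "mu > 0"
  shows "Re (fz * cnj vz) \<le> mu / 2 * (cmod vz)^2 + (cmod fz)^2 / (2 * mu)"
proof -
  have "Re (fz * cnj vz) \<le> cmod (fz * cnj vz)" by (rule complex_Re_le_cmod)
  also have "\<dots> = cmod fz * cmod vz" by (simp add: norm_mult)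
  also have "\<dots> \<le> mu / 2 * (cmod vz)^2 + (cmod fz)^2 / (2 * mu)"
  proof -
    have "0 \<le> (mu * cmod vz - cmod fz)^2" by simp
    then have "2 * mu * (cmod fz * cmod vz) \<le> mu^2 * (cmod vz)^2 + (cmod fz)^2"
      by (simp add: power2_diff power_mult_distrib algebra_simps)
    then show ?thesis using assms by (simp add: field_simps power2_eq_square)
  qed
  finally show ?thesis .
qed

theorem lemma3p8:
  fixes \<gamma> \<alpha> lam \<rho> \<eta> K b T \<tau> :: real
    and U :: "real \<Rightarrow> real"
    and M N :: nat
    and v f :: "nat \<Rightarrow> nat \<Rightarrow> complex"
    and \<phi> :: "nat \<Rightarrow> complex"
  assumes "0 < \<gamma>" "\<gamma> < 1" "1 < \<alpha>" "\<alpha> < 2" "0 \<le> lam" "0 < \<rho>"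
    and "0 < K" "0 < b" "0 < T"
    and "\<forall>x\<in>{0..b}. 0 \<le> U x"
    and "2 \<le> M" "1 \<le> N"
    and "0 < \<tau>" "real N * \<tau> \<le> T"
    and eq: "\<forall>i n. 1 \<le> i \<and> i \<le> M - 1 \<and> 1 \<le> n \<and> n \<le> N \<longrightarrow>
       (1 / complex_of_real (\<tau> powr \<gamma>)) *
         (\<Sum>k=0..n. complex_of_real (lk_2 \<gamma> lam \<rho> \<tau> (U (real i * (b / real M))) k)
            * exp (- \<i> * complex_of_real (\<eta> * U (real i * (b / real M)) * real k * \<tau>))
            * v (n - k) i)
       - complex_of_real (kappa K \<alpha> / (b / real M) powr \<alpha>) *
         (\<Sum>j=0..M. complex_of_real (wmat \<alpha> i j) * v n j)
       = f n i"
    and init: "\<forall>i. 1 \<le> i \<and> i \<le> M - 1 \<longrightarrow> v 0 i = \<phi> i"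
    and bc: "\<forall>n\<le>N. v n 0 = 0 \<and> v n M = 0"
  shows "\<tau> * (\<Sum>n=1..N. gnorm2 (b / real M) M (v n))
     \<le> \<tau> powr (1 - \<gamma>) * l0_2 \<gamma> lam \<tau> * b powr \<alpha> * \<bar>Gamma (1 - \<alpha>)\<bar> / kappa K \<alpha>
          * gnorm2 (b / real M) M (v 0)
       + b powr (2 * \<alpha>) * (Gamma (1 - \<alpha>))^2 / (4 * (kappa K \<alpha>)^2)
          * \<tau> * (\<Sum>n=1..N. gnorm2 (b / real M) M (f n))"
proof -
  define h where "h = b / real M"
  have h0: "h > 0" using assms by (simp add: h_def)
  define uu where "uu i = U (real i * h)" for i
  define cst where "cst = kappa K \<alpha> / h powr \<alpha>"
  define q where "q = qq \<alpha> (M - 1)"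
  define mu where "mu = cst * 2 * q"
  define l0 where "l0 = l0_2 \<gamma> lam \<tau>"
  define tg where "tg = \<tau> powr \<gamma>"
  define Gm where "Gm = - Gamma (1 - \<alpha>)"
  define kap where "kap = kappa K \<alpha>"
  have kap0: "kap > 0" using kappa_pos assms by (simp add: kap_def)
  have Gm0: "Gm > 0" using Gamma_1m_neg[of \<alpha>] assms by (simp add: Gm_def)
  have tg0: "tg > 0" using assms by (simp add: tg_def)
  have l00: "l0 \<ge> 0" using l0_nonneg assms by (simp add: l0_def)
  have cst0: "cst > 0" using kap0 h0 by (simp add: cst_def kap_def)
  have qlow: "q \<ge> real M powr (- \<alpha>) / Gm" using qq_lower[of \<alpha> M] assms by (simp add: q_def Gm_def)
  define mu0 where "mu0 = 2 * kap / (b powr \<alpha> * Gm)"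
  have mu00: "mu0 > 0" using kap0 Gm0 assms by (simp add: mu0_def)
  have mumu0: "mu0 \<le> mu"
  proof -
    have hM: "h * real M = b" using assms(11) by (simp add: h_def)
    have "h powr \<alpha> * real M powr \<alpha> = (h * real M) powr \<alpha>"
      by (rule powr_mult[symmetric])
    then have hb: "h powr \<alpha> * real M powr \<alpha> = b powr \<alpha>" unfolding hM .
    have "mu0 = cst * 2 * (real M powr (- \<alpha>) / Gm)"
      unfolding mu0_def cst_def kap_def[symmetric] hb[symmetric] using Gm0 h0 assms
      by (simp add: powr_minus field_simps)
    also have "\<dots> \<le> cst * 2 * q" using qlow cst0 by (intro mult_left_mono) auto
    finally show ?thesis by (simp add: mu_def)
  qed
  have mu0': "mu > 0" using mu00 mumu0 by linarith
  define Tt where "Tt n i = (\<Sum>k=0..n. complex_of_real (lk_2 \<gamma> lam \<rho> \<tau> (uu i) k)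
            * exp (- \<i> * complex_of_real (\<eta> * uu i * real k * \<tau>)) * v (n - k) i)" for n i
  define Ss where "Ss n i = (\<Sum>j=0..M. complex_of_real (wmat \<alpha> i j) * v n j)" for n i
  define SV where "SV = (\<Sum>n=1..N. \<Sum>i=1..M-1. (cmod (v n i))^2)"
  define S0 where "S0 = (\<Sum>i=1..M-1. (cmod (v 0 i))^2)"
  define SF where "SF = (\<Sum>n=1..N. \<Sum>i=1..M-1. (cmod (f n i))^2)"
  have eqn: "f n i * cnj (v n i) = (1 / of_real tg) * (Tt n i * cnj (v n i)) - of_real cst * (Ss n i * cnj (v n i))"
    if "n \<in> {1..N}" "i \<in> {1..M-1}" for n i
    using eq[rule_format, of i n] that
    by (auto simp: Tt_def Ss_def uu_def h_def cst_def tg_def algebra_simps)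
  have time: "Re (\<Sum>n=1..N. Tt n i * cnj (v n i)) \<ge> - l0 * (cmod (v 0 i))^2" if "i \<in> {1..M-1}" for i
  proof -
    have "uu i \<ge> 0"
    proof -
      have "real i * h \<le> real M * h" using that h0 by (intro mult_right_mono) auto
      then have "real i * h \<in> {0..b}" using h0 assms by (auto simp: h_def)
      then show ?thesis using assms by (simp add: uu_def)
    qed
    then have "Re (\<Sum>n=1..N. (\<Sum>k=0..n. (complex_of_real (lk_2 \<gamma> lam \<rho> \<tau> (uu i) k)
            * exp (- \<i> * complex_of_real (\<eta> * uu i * real k * \<tau>))) * (\<lambda>n. v n i) (n - k)) * cnj ((\<lambda>n. v n i) n))
       \<ge> - l0_2 \<gamma> lam \<tau> * (cmod ((\<lambda>n. v n i) 0))^2"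
      using assms by (intro time_form) auto
    then show ?thesis by (simp add: Tt_def l0_def sum_distrib_right)
  qed
  have space: "Re (\<Sum>i=1..M-1. Ss n i * cnj (v n i)) \<le> - 2 * q * (\<Sum>i=1..M-1. (cmod (v n i))^2)"
    if "n \<in> {1..N}" for n
    unfolding Ss_def q_def using spatial_bound[of \<alpha> M "v n"] assms bc that by auto
  have "(\<Sum>n=1..N. \<Sum>i=1..M-1. Re (f n i * cnj (v n i)))
        = (1 / tg) * (\<Sum>i=1..M-1. Re (\<Sum>n=1..N. Tt n i * cnj (v n i))) - cst * (\<Sum>n=1..N. Re (\<Sum>i=1..M-1. Ss n i * cnj (v n i)))"
  proof -
    have "(\<Sum>n=1..N. \<Sum>i=1..M-1. Re (f n i * cnj (v n i)))
       = (\<Sum>n=1..N. \<Sum>i=1..M-1. (1 / tg) * Re (Tt n i * cnj (v n i)) - cst * Re (Ss n i * cnj (v n i)))"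
      by (intro sum.cong refl) (simp add: eqn)
    also have "\<dots> = (1 / tg) * (\<Sum>n=1..N. \<Sum>i=1..M-1. Re (Tt n i * cnj (v n i))) - cst * (\<Sum>n=1..N. \<Sum>i=1..M-1. Re (Ss n i * cnj (v n i)))"
      by (simp add: sum_subtractf sum_distrib_left)
    also have "(\<Sum>n=1..N. \<Sum>i=1..M-1. Re (Tt n i * cnj (v n i))) = (\<Sum>i=1..M-1. \<Sum>n=1..N. Re (Tt n i * cnj (v n i)))"
      by (rule sum.swap)
    finally show ?thesis by (simp add: Re_sum)
  qed
  also have "\<dots> \<ge> (1 / tg) * (\<Sum>i=1..M-1. - l0 * (cmod (v 0 i))^2) - cst * (\<Sum>n=1..N. - 2 * q * (\<Sum>i=1..M-1. (cmod (v n i))^2))"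
    using tg0 cst0 time space by (intro diff_mono mult_left_mono sum_mono) auto
  finally have lower: "(\<Sum>n=1..N. \<Sum>i=1..M-1. Re (f n i * cnj (v n i))) \<ge> - (l0 / tg) * S0 + mu * SV"
    by (simp add: S0_def SV_def mu_def sum_distrib_left sum_negf algebra_simps)
  have upper: "(\<Sum>n=1..N. \<Sum>i=1..M-1. Re (f n i * cnj (v n i))) \<le> mu / 2 * SV + SF / (2 * mu)"
  proof -
    have "(\<Sum>n=1..N. \<Sum>i=1..M-1. Re (f n i * cnj (v n i))) \<le> (\<Sum>n=1..N. \<Sum>i=1..M-1. mu / 2 * (cmod (v n i))^2 + (cmod (f n i))^2 / (2 * mu))"
      by (intro sum_mono young mu0')
    also have "\<dots> = mu / 2 * SV + SF / (2 * mu)"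
      by (simp add: SV_def SF_def sum.distrib sum_distrib_left sum_divide_distrib)
    finally show ?thesis .
  qed
  have SVb: "SV \<le> 2 * (l0 / tg) * S0 / mu + SF / mu^2"
  proof -
    have "mu / 2 * SV \<le> (l0 / tg) * S0 + SF / (2 * mu)" using lower upper by linarith
    moreover have "mu / 2 * SV = (mu * SV) / 2" by simp
    moreover have "SF / (2 * mu) = (SF / mu) / 2" by simp
    ultimately have "mu * SV \<le> 2 * (l0 / tg) * S0 + SF / mu" by linarith
    then have "SV \<le> (2 * (l0 / tg) * S0 + SF / mu) / mu" using mu0' by (simp add: field_simps)
    then show ?thesis using mu0' by (simp add: field_simps power2_eq_square)
  qed
  have S00: "S0 \<ge> 0" "SF \<ge> 0" by (auto simp: S0_def SF_def intro!: sum_nonneg)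
  have lhs: "\<tau> * (\<Sum>n=1..N. gnorm2 (b / real M) M (v n)) = \<tau> * h * SV"
    by (simp add: gnorm2_def h_def[symmetric] SV_def sum_distrib_left mult.assoc)
  have r1: "gnorm2 (b / real M) M (v 0) = h * S0" by (simp add: gnorm2_def h_def S0_def)
  have r2: "(\<Sum>n=1..N. gnorm2 (b / real M) M (f n)) = h * SF"
    by (simp add: gnorm2_def h_def[symmetric] SF_def sum_distrib_left)
  have tpow: "\<tau> powr (1 - \<gamma>) = \<tau> / tg" using assms by (simp add: tg_def powr_diff)
  have absG: "\<bar>Gamma (1 - \<alpha>)\<bar> = Gm" "(Gamma (1 - \<alpha>))^2 = Gm^2" using Gm0 by (auto simp: Gm_def)
  have b2: "b powr (2 * \<alpha>) = (b powr \<alpha>)^2" using assms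
    by (simp add: power2_eq_square powr_add[symmetric])
  have k1: "2 / mu \<le> b powr \<alpha> * Gm / kap"
  proof -
    have "2 / mu \<le> 2 / mu0" using mumu0 mu00 by (intro divide_left_mono) auto
    also have "2 / mu0 = b powr \<alpha> * Gm / kap" using kap0 Gm0 assms by (simp add: mu0_def field_simps)
    finally show ?thesis .
  qed
  have k2: "1 / mu^2 \<le> (b powr \<alpha>)^2 * Gm^2 / (4 * kap^2)"
  proof -
    have "1 / mu^2 \<le> 1 / mu0^2" using mumu0 mu00 by (intro divide_left_mono power_mono mult_pos_pos) auto
    also have "1 / mu0^2 = (b powr \<alpha>)^2 * Gm^2 / (4 * kap^2)" using kap0 Gm0 assms
      by (simp add: mu0_def field_simps power2_eq_square)
    finally show ?thesis .
  qed
  have "\<tau> * h * SV \<le> \<tau> * h * (2 * (l0 / tg) * S0 / mu + SF / mu^2)"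
    using SVb h0 assms by (intro mult_left_mono) auto
  also have "\<dots> = (\<tau> / tg) * l0 * (2 / mu) * (h * S0) + (1 / mu^2) * \<tau> * (h * SF)"
    by (simp add: field_simps)
  also have "\<dots> \<le> (\<tau> / tg) * l0 * (b powr \<alpha> * Gm / kap) * (h * S0) + ((b powr \<alpha>)^2 * Gm^2 / (4 * kap^2)) * \<tau> * (h * SF)"
    using k1 k2 l00 tg0 assms h0 S00
    by (intro add_mono mult_right_mono mult_left_mono) (auto intro!: mult_nonneg_nonneg)
  finally show ?thesis
    unfolding lhs r1 r2 tpow absG b2 kap_def[symmetric] l0_def[symmetric] by (simp add: mult_ac)
qed

end
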